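(* Let $f_n:\{0,1\}^{m_n}\to\{0,1\}^n$ be a family of functions computable by $\mathbf{NC}^0$ circuits, and let $c$ be the maximum number of inputs affecting any single output. Let $W_1,\dots,W_{m_n}$ be independent $\{0,1\}$-valued random variables and $X'=f_n(W)$. Let $n\ge b_0\ge b_1\ge\cdots\ge b_{2c}\ge1$. Then for every $n$ there exist $0<i\le 2c$, $S\subseteq\{1,\dots,n\}$ and $T\subseteq\{1,\dots,m_n\}$ such that $|S|\ge\frac{n}{2cb_i}$, $|T|\le cn/b_{i-1}$, and the random variables $\{X'_j:j\in S\}$ are mutually independent conditioned on any fixed value of $\{W_j:j\in T\}$.
   Context: An $\mathbf{NC}^0$ circuit family is one in which each output bit depends on at most a constant number $c$ (independent of $n$) of input bits; an input "affects" an output if the output's value depends on it. *)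

theory Defs
  imports "HOL-Probability.Probability"
begin

text \<open>Inputs of length m are modelled as functions nat => bool that are False
outside {0..<m} (this is exactly the support of the product pmf below).\<close>

definition inputs :: "nat \<Rightarrow> (nat \<Rightarrow> bool) set" where
  "inputs m = {w. \<forall>i. m \<le> i \<longrightarrow> \<not> w i}"

definition affects :: "((nat \<Rightarrow> bool) \<Rightarrow> nat \<Rightarrow> bool) \<Rightarrow> nat \<Rightarrow> nat \<Rightarrow> nat \<Rightarrow> bool" where
  "affects f m i j \<longleftrightarrow> i < m \<and> (\<exists>w \<in> inputs m. f w j \<noteq> f (w(i := \<not> w i)) j)"

definition locality :: "((nat \<Rightarrow> bool) \<Rightarrow> nat \<Rightarrow> bool) \<Rightarrow> nat \<Rightarrow> nat \<Rightarrow> nat" where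
  "locality f m n = Max ((\<lambda>j. card {i. affects f m i j}) ` {0..<n})"

definition input_dist :: "nat \<Rightarrow> (nat \<Rightarrow> real) \<Rightarrow> (nat \<Rightarrow> bool) pmf" where
  "input_dist m p = Pi_pmf {0..<m} False (\<lambda>i. bernoulli_pmf (p i))"

end

theory Submission
  imports Defs
begin


lemma indep_vars_pmf_AE_cong:
  assumes ind: "prob_space.indep_vars (measure_pmf P) (\<lambda>_. count_space UNIV) X I"
  and eq: "\<And>i w. i \<in> I \<Longrightarrow> w \<in> set_pmf P \<Longrightarrow> X i w = Y i w"
  shows "prob_space.indep_vars (measure_pmf P) (\<lambda>_. count_space UNIV) Y I"
proof -
  interpret prob_space "measure_pmf P" by (rule measure_pmf.prob_space_axioms)
  show ?thesis
  proof (cases "I = {}")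
    case True
    then show ?thesis
      by (subst prob_space.indep_vars_def [OF measure_pmf.prob_space_axioms],
        subst prob_space.indep_sets_def [OF measure_pmf.prob_space_axioms]) simp_all
  next
    case False
    have d1: "distr (measure_pmf P) (\<Pi>\<^sub>M i\<in>I. count_space UNIV) (\<lambda>x. \<lambda>i\<in>I. Y i x)
       = distr (measure_pmf P) (\<Pi>\<^sub>M i\<in>I. count_space UNIV) (\<lambda>x. \<lambda>i\<in>I. X i x)"
      by (rule distr_cong_AE) (auto intro!: AE_pmfI simp: eq space_PiM)
    have d2: "distr (measure_pmf P) (count_space UNIV) (Y i) = distr (measure_pmf P) (count_space UNIV) (X i)" if "i \<in> I" for i
      by (rule distr_cong_AE) (auto intro!: AE_pmfI simp: eq that)
    from ind have "distr (measure_pmf P) (\<Pi>\<^sub>M i\<in>I. count_space UNIV) (\<lambda>x. \<lambda>i\<in>I. X i x) =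
       (\<Pi>\<^sub>M i\<in>I. distr (measure_pmf P) (count_space UNIV) (X i))"
      using False by (subst (asm) prob_space.indep_vars_iff_distr_eq_PiM'[OF measure_pmf.prob_space_axioms]) auto
    then show ?thesis using False d1 d2
      by (subst prob_space.indep_vars_iff_distr_eq_PiM'[OF measure_pmf.prob_space_axioms]) (auto cong: PiM_cong)
  qed
qed

lemma cond_Pi_pmf:
  assumes fin: "finite I" and TI: "T \<subseteq> I"
    and ne: "set_pmf (Pi_pmf I dflt B) \<inter> {w. \<forall>j\<in>T. w j = a j} \<noteq> {}"
  shows "cond_pmf (Pi_pmf I dflt B) {w. \<forall>j\<in>T. w j = a j}
       = Pi_pmf I dflt (\<lambda>i. if i \<in> T then return_pmf (a i) else B i)"
proof (rule pmf_eqI)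
  fix w
  let ?E = "{w. \<forall>j\<in>T. w j = a j}"
  let ?C = "\<lambda>i. if i \<in> T then {a i} else UNIV"
  have E: "?E = Pi I ?C" using TI by (auto simp: Pi_def)
  have "measure_pmf.prob (Pi_pmf I dflt B) ?E = (\<Prod>i\<in>I. measure_pmf.prob (B i) (?C i))"
    unfolding E by (rule measure_Pi_pmf_Pi[OF fin])
  also have "\<dots> = (\<Prod>i\<in>I. if i \<in> T then pmf (B i) (a i) else 1)"
    by (intro prod.cong) (auto simp: measure_pmf_single)
  also have "\<dots> = (\<Prod>i\<in>T. pmf (B i) (a i))"
    using fin TI by (subst prod.If_cases) (auto simp: Int_absorb1)
  finally have mu: "measure_pmf.prob (Pi_pmf I dflt B) ?E = (\<Prod>i\<in>T. pmf (B i) (a i))" .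
  have nz: "measure_pmf.prob (Pi_pmf I dflt B) ?E \<noteq> 0"
    using ne by (rule measure_measure_pmf_not_zero)
  have split: "(\<Prod>i\<in>I. g i) = (\<Prod>i\<in>T. g i) * (\<Prod>i\<in>I-T. g i)" for g :: "_ \<Rightarrow> real"
    using fin TI by (metis prod.subset_diff mult.commute)
  show "pmf (cond_pmf (Pi_pmf I dflt B) ?E) w = pmf (Pi_pmf I dflt (\<lambda>i. if i \<in> T then return_pmf (a i) else B i)) w"
  proof (cases "w \<in> ?E")
    case True
    show ?thesis
    proof (cases "\<forall>x. x \<notin> I \<longrightarrow> w x = dflt")
      case dl: True
      have "(\<Prod>i\<in>I. pmf (if i \<in> T then return_pmf (a i) else B i) (w i))
          = (\<Prod>i\<in>T. pmf (if i \<in> T then return_pmf (a i) else B i) (w i)) * (\<Prod>i\<in>I-T. pmf (if i \<in> T then return_pmf (a i) else B i) (w i))"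
        by (rule split)
      also have "\<dots> = (\<Prod>i\<in>I-T. pmf (B i) (w i))"
        using True by (simp add: indicator_def)
      finally have r: "(\<Prod>i\<in>I. pmf (if i \<in> T then return_pmf (a i) else B i) (w i)) = (\<Prod>i\<in>I-T. pmf (B i) (w i))" .
      have l: "(\<Prod>i\<in>I. pmf (B i) (w i)) = (\<Prod>i\<in>T. pmf (B i) (a i)) * (\<Prod>i\<in>I-T. pmf (B i) (w i))"
        using True by (simp add: split)
      show ?thesis using True dl nz unfolding pmf_cond[OF ne] mu
        by (simp add: pmf_Pi[OF fin] r l)
    next
      case False
      then show ?thesis using True unfolding pmf_cond[OF ne] by (simp add: pmf_Pi_outside[OF fin])
    qed
  next
    case False
    then obtain j where j: "j \<in> T" "w j \<noteq> a j" by auto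
    have "(\<Prod>i\<in>I. pmf (if i \<in> T then return_pmf (a i) else B i) (w i)) = 0"
      using j TI fin by (intro prod_zero bexI[of _ j]) auto
    then have "pmf (Pi_pmf I dflt (\<lambda>i. if i \<in> T then return_pmf (a i) else B i)) w = 0"
      by (simp add: pmf_Pi[OF fin])
    then show ?thesis using False unfolding pmf_cond[OF ne] by auto
  qed
qed



lemma sets_PiM_bool_all:
  assumes fin: "finite K" and A: "A \<subseteq> space (PiM K (\<lambda>_. count_space (UNIV :: bool set)))"
  shows "A \<in> sets (PiM K (\<lambda>_. count_space (UNIV :: bool set)))"
proof -
  have sp: "space (PiM K (\<lambda>_. count_space (UNIV :: bool set))) = PiE K (\<lambda>_. UNIV)"
    by (simp add: space_PiM)
  have "finite (PiE K (\<lambda>_. UNIV :: bool set))" by (intro finite_PiE fin) auto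
  then have finA: "finite A" using A unfolding sp by (rule rev_finite_subset)
  have single: "{x} \<in> sets (PiM K (\<lambda>_. count_space (UNIV :: bool set)))" if "x \<in> A" for x
  proof -
    have x: "x \<in> PiE K (\<lambda>_. UNIV)" using that A sp by auto
    have "{x} = PiE K (\<lambda>i. {x i})"
      using x by (auto simp: PiE_def extensional_def Pi_def fun_eq_iff)
    also have "\<dots> \<in> sets (PiM K (\<lambda>_. count_space (UNIV :: bool set)))"
      by (intro sets_PiM_I_finite fin) auto
    finally show ?thesis .
  qed
  have "A = (\<Union>x\<in>A. {x})" by auto
  also have "\<dots> \<in> sets (PiM K (\<lambda>_. count_space (UNIV :: bool set)))"
    using finA single by (intro sets.finite_UN) auto
  finally show ?thesis .
qed

lemma measurable_PiM_bool:
  assumes fin: "finite K"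
  shows "(h :: _ \<Rightarrow> bool) \<in> measurable (PiM K (\<lambda>_. count_space (UNIV :: bool set))) (count_space UNIV)"
  by (subst measurable_count_space_eq2_countable) (auto intro!: sets_PiM_bool_all fin)

lemma indep_blocks:
  fixes X :: "nat \<Rightarrow> (nat \<Rightarrow> bool) \<Rightarrow> bool"
  assumes fin: "finite I" and KI: "\<And>j. j \<in> S \<Longrightarrow> K j \<subseteq> I"
    and disj: "disjoint_family_on K S"
    and dep: "\<And>j w. j \<in> S \<Longrightarrow> w \<in> set_pmf (Pi_pmf I dflt B) \<Longrightarrow> X j w = Y j (restrict w (K j))"
  shows "prob_space.indep_vars (measure_pmf (Pi_pmf I dflt B)) (\<lambda>_. count_space UNIV) X S"
proof -
  have i0: "prob_space.indep_vars (measure_pmf (Pi_pmf I dflt B)) (\<lambda>_. count_space (UNIV :: bool set)) (\<lambda>x f. f x) I"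
    by (rule indep_vars_Pi_pmf[OF fin])
  have i1: "prob_space.indep_vars (measure_pmf (Pi_pmf I dflt B)) (\<lambda>j. PiM (K j) (\<lambda>_. count_space (UNIV :: bool set)))
      (\<lambda>j \<omega>. restrict (\<lambda>i. \<omega> i) (K j)) S"
    using prob_space.indep_vars_restrict[OF measure_pmf.prob_space_axioms i0 KI disj] by simp
  have i2: "prob_space.indep_vars (measure_pmf (Pi_pmf I dflt B)) (\<lambda>_. count_space UNIV)
      (\<lambda>j \<omega>. Y j (restrict (\<lambda>i. \<omega> i) (K j))) S"
    by (rule prob_space.indep_vars_compose2[OF measure_pmf.prob_space_axioms i1])
       (rule measurable_PiM_bool, meson KI fin finite_subset)
  show ?thesis
    by (rule indep_vars_pmf_AE_cong[OF i2]) (simp add: dep)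
qed



lemma local_dep:
  assumes "w \<in> inputs m" "w' \<in> inputs m" "\<And>i. affects f m i j \<Longrightarrow> w i = w' i"
  shows "f w j = f w' j"
proof -
  have "\<And>w. w \<in> inputs m \<Longrightarrow> (\<And>i. affects f m i j \<Longrightarrow> w i = w' i) \<Longrightarrow>
      card {i. i < m \<and> w i \<noteq> w' i} = d \<Longrightarrow> f w j = f w' j" for d
  proof (induction d)
    case 0
    have "{i. i < m \<and> w i \<noteq> w' i} = {}"
      using 0(3) by (simp add: card_eq_0_iff) 
    have "w i = w' i" for i
    proof (cases "i < m")
      case True then show ?thesis using \<open>{i. i < m \<and> w i \<noteq> w' i} = {}\<close> by blast
    next
      case False then show ?thesis using 0(1) assms(2) unfolding inputs_def by auto
    qed
    then have "w = w'" by auto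
    then show ?case by simp
  next
    case (Suc d)
    let ?D = "{i. i < m \<and> w i \<noteq> w' i}"
    have "?D \<noteq> {}" using Suc.prems(3) by (metis card.empty nat.distinct(1))
    then obtain i where i: "i < m" "w i \<noteq> w' i" by auto
    define w1 where "w1 = w(i := \<not> w i)"
    have na: "\<not> affects f m i j" using i Suc.prems(2) by auto
    have eq: "f w j = f w1 j"
      using na i Suc.prems(1) unfolding affects_def w1_def by auto
    have w1in: "w1 \<in> inputs m" using Suc.prems(1) i unfolding inputs_def w1_def by auto
    have "{i. i < m \<and> w1 i \<noteq> w' i} = ?D - {i}"
      using i unfolding w1_def by auto
    then have "card {i. i < m \<and> w1 i \<noteq> w' i} = d"
      using Suc.prems(3) i by (simp add: card_Diff_singleton)
    moreover have "w1 i' = w' i'" if "affects f m i' j" for i'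
    proof -
      have "i' \<noteq> i" using that na by auto
      then show ?thesis using Suc.prems(2)[OF that] unfolding w1_def by simp
    qed
    ultimately have "f w1 j = f w' j"
      using Suc.IH[OF w1in] by blast
    then show ?case using eq by simp
  qed
  then show ?thesis using assms by blast
qed

lemma greedy:
  fixes G :: "'a set" and D :: real
  assumes "finite G" and sym: "\<And>x y. R x y \<Longrightarrow> R y x" and refl: "\<And>x. R x x"
    and "\<And>x. x \<in> G \<Longrightarrow> real (card {y\<in>G. R x y}) \<le> D"
  shows "\<exists>S\<subseteq>G. (\<forall>x\<in>S. \<forall>y\<in>S. x \<noteq> y \<longrightarrow> \<not> R x y) \<and> real (card G) \<le> D * real (card S)"
  using assms(1,4)
proof (induction G rule: finite_psubset_induct)
  case (psubset G)
  show ?case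
  proof (cases "G = {}")
    case True then show ?thesis by auto
  next
    case False
    then obtain x where x: "x \<in> G" by auto
    define N where "N = {y\<in>G. R x y}"
    define G' where "G' = G - N"
    have sub: "G' \<subset> G" using x refl unfolding G'_def N_def by auto
    have bd: "real (card {y\<in>G'. R z y}) \<le> D" if "z \<in> G'" for z
    proof -
      have "card {y\<in>G'. R z y} \<le> card {y\<in>G. R z y}"
        by (rule card_mono) (use psubset.hyps in \<open>auto simp: G'_def\<close>)
      then show ?thesis using psubset.prems[of z] that unfolding G'_def by auto
    qed
    obtain S' where S': "S' \<subseteq> G'" "\<forall>x\<in>S'. \<forall>y\<in>S'. x \<noteq> y \<longrightarrow> \<not> R x y"
      "real (card G') \<le> D * real (card S')"
      using psubset.IH[OF sub] bd by blast
    have finS': "finite S'" using S'(1) psubset.hyps sub by (meson finite_subset psubset_imp_subset)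
    have xS': "x \<notin> S'" using S'(1) x refl unfolding G'_def N_def by auto
    have NG: "N \<subseteq> G" unfolding N_def by auto
    have finN: "finite N" using NG psubset.hyps by (rule finite_subset)
    have "card N \<le> card G" using NG psubset.hyps by (rule card_mono[rotated])
    moreover have "card G' = card G - card N"
      unfolding G'_def using card_Diff_subset[OF finN NG] .
    ultimately have cG: "card G = card G' + card N" by simp
    have cN: "real (card N) \<le> D" using psubset.prems[OF x] unfolding N_def .
    show ?thesis
    proof (intro exI[of _ "insert x S'"] conjI)
      show "insert x S' \<subseteq> G" using S'(1) x unfolding G'_def by auto
      show "\<forall>a\<in>insert x S'. \<forall>b\<in>insert x S'. a \<noteq> b \<longrightarrow> \<not> R a b"
        using S'(1,2) sym unfolding G'_def N_def by blast
      show "real (card G) \<le> D * real (card (insert x S'))"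
        using cG cN S'(3) finS' xS' by (simp add: algebra_simps)
    qed
  qed
qed



theorem mainTheorem12:
  fixes f :: "(nat \<Rightarrow> bool) \<Rightarrow> nat \<Rightarrow> bool"
    and m n c :: nat
    and p :: "nat \<Rightarrow> real"
    and b :: "nat \<Rightarrow> real"
  assumes c_def: "c = locality f m n"
    and c_pos: "c \<ge> 1"
    and p_range: "\<And>i. i < m \<Longrightarrow> 0 \<le> p i \<and> p i \<le> 1"
    and b0: "b 0 \<le> real n"
    and b_mono: "\<And>k. k < 2 * c \<Longrightarrow> b (Suc k) \<le> b k"
    and b_last: "b (2 * c) \<ge> 1"
  shows "\<exists>i S T. 0 < i \<and> i \<le> 2 * c \<and> S \<subseteq> {0..<n} \<and> T \<subseteq> {0..<m}
     \<and> real (card S) \<ge> real n / (2 * real c * b i)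
     \<and> real (card T) \<le> real c * real n / b (i - 1)
     \<and> (\<forall>a :: nat \<Rightarrow> bool.
          set_pmf (input_dist m p) \<inter> {w. \<forall>j\<in>T. w j = a j} \<noteq> {} \<longrightarrow>
          prob_space.indep_vars
            (measure_pmf (cond_pmf (input_dist m p) {w. \<forall>j\<in>T. w j = a j}))
            (\<lambda>_. count_space (UNIV :: bool set)) (\<lambda>j w. f w j) S)"
proof -
  define N where "N = (\<lambda>j. {i. affects f m i j})"
  have Nsub: "N j \<subseteq> {0..<m}" for j unfolding N_def affects_def by auto
  have finN: "finite (N j)" for j using Nsub[of j] finite_subset by blast
  have cardN: "card (N j) \<le> c" if "j < n" for j
  proof -
    have "card (N j) \<in> (\<lambda>j. card {i. affects f m i j}) ` {0..<n}" using that unfolding N_def by auto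
    then show ?thesis unfolding c_def locality_def by (intro Max_ge) auto
  qed
  define deg where "deg = (\<lambda>t. card {j\<in>{0..<n}. t \<in> N j})"
  have dc: "(\<Sum>t\<in>{0..<m}. deg t) = (\<Sum>j\<in>{0..<n}. card (N j))"
  proof -
    have "(\<Sum>t\<in>{0..<m}. deg t) = (\<Sum>t\<in>{0..<m}. \<Sum>j\<in>{0..<n}. if t \<in> N j then 1 else 0)"
      unfolding deg_def by (intro sum.cong refl) (simp add: sum.If_cases Int_def conj_commute)
    also have "\<dots> = (\<Sum>j\<in>{0..<n}. \<Sum>t\<in>{0..<m}. if t \<in> N j then 1 else 0)"
      by (rule sum.swap)
    also have "\<dots> = (\<Sum>j\<in>{0..<n}. card (N j))"
    proof (intro sum.cong refl)
      fix j
      have "{0..<m} \<inter> {t. t \<in> N j} = N j" using Nsub[of j] by auto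
      then show "(\<Sum>t\<in>{0..<m}. if t \<in> N j then 1 else 0) = card (N j)"
        by (simp add: sum.If_cases)
    qed
    finally show ?thesis .
  qed
  have sumN: "(\<Sum>j\<in>{0..<n}. card (N j)) \<le> c * n"
    using sum_mono[of "{0..<n}" "\<lambda>j. card (N j)" "\<lambda>_. c"] cardN by (auto simp: mult.commute)
  have tot: "(\<Sum>t\<in>{0..<m}. deg t) \<le> c * n" using dc sumN by simp
  have bmono: "b (k + d) \<le> b k" if "k + d \<le> 2 * c" for k d
    using that
  proof (induction d)
    case 0 then show ?case by simp
  next
    case (Suc d)
    then have "b (Suc (k + d)) \<le> b (k + d)" by (intro b_mono) simp
    then show ?case using Suc by simp
  qed
  have bge: "b k \<le> b k'" if "k' \<le> k" "k \<le> 2 * c" for k k'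
    using bmono[of k' "k - k'"] that by simp
  have bpos: "b k \<ge> 1" if "k \<le> 2 * c" for k
    using bge[of k "2 * c"] that b_last by simp
  define L where "L = (\<lambda>k. {t\<in>{0..<m}. b k \<le> real (deg t) \<and> real (deg t) < b (k - 1)})"
  have Ldisj: "L k \<inter> L k' = {}" if "k \<in> {1..2*c}" "k' \<in> {1..2*c}" "k \<noteq> k'" for k k'
  proof -
    have "L k \<inter> L k' = {}" if "k \<in> {1..2*c}" "k' \<in> {1..2*c}" "k < k'" for k k'
    proof -
      have "b (k' - 1) \<le> b k" using that by (intro bge) auto
      then show ?thesis unfolding L_def by auto
    qed
    then show ?thesis using that by (metis inf_commute linorder_neqE_nat)
  qed
  define touch where "touch = (\<lambda>k. {j\<in>{0..<n}. N j \<inter> L k \<noteq> {}})"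
  have touch_le: "card (touch k) \<le> (\<Sum>j\<in>{0..<n}. card (N j \<inter> L k))" for k
  proof -
    have "card (touch k) = (\<Sum>j\<in>touch k. 1)" by simp
    also have "\<dots> \<le> (\<Sum>j\<in>touch k. card (N j \<inter> L k))"
      by (intro sum_mono) (auto simp: touch_def finN card_gt_0_iff Suc_leI)
    also have "\<dots> \<le> (\<Sum>j\<in>{0..<n}. card (N j \<inter> L k))"
      by (intro sum_mono2) (auto simp: touch_def)
    finally show ?thesis .
  qed
  have sum_touch: "(\<Sum>k\<in>{1..2*c}. card (touch k)) \<le> c * n"
  proof -
    have "(\<Sum>k\<in>{1..2*c}. card (touch k)) \<le> (\<Sum>k\<in>{1..2*c}. \<Sum>j\<in>{0..<n}. card (N j \<inter> L k))"
      by (intro sum_mono touch_le)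
    also have "\<dots> = (\<Sum>j\<in>{0..<n}. \<Sum>k\<in>{1..2*c}. card (N j \<inter> L k))" by (rule sum.swap)
    also have "\<dots> = (\<Sum>j\<in>{0..<n}. card (\<Union>k\<in>{1..2*c}. N j \<inter> L k))"
    proof (intro sum.cong refl)
      fix j
      show "(\<Sum>k\<in>{1..2*c}. card (N j \<inter> L k)) = card (\<Union>k\<in>{1..2*c}. N j \<inter> L k)"
      proof -
        have dd: "\<forall>k\<in>{1..2*c}. \<forall>k'\<in>{1..2*c}. k \<noteq> k' \<longrightarrow> (N j \<inter> L k) \<inter> (N j \<inter> L k') = {}"
          using Ldisj by blast
        show ?thesis
          apply (rule card_UN_disjoint[symmetric])
            apply simp
           apply (simp add: finN)
          apply (rule dd)
          done
      qed
    qed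
    also have "\<dots> \<le> (\<Sum>j\<in>{0..<n}. card (N j))"
      by (intro sum_mono card_mono finN) auto
    finally show ?thesis using sumN by linarith
  qed
  obtain k where k: "k \<in> {1..2*c}" "2 * card (touch k) \<le> n"
  proof (rule ccontr)
    assume "\<not> thesis"
    then have h: "\<forall>k\<in>{1..2*c}. n + 1 \<le> 2 * card (touch k)" using that by force
    have "(\<Sum>k\<in>{1..2*c}. n + 1) \<le> (\<Sum>k\<in>{1..2*c}. 2 * card (touch k))"
      by (intro sum_mono) (use h in auto)
    also have "\<dots> = 2 * (\<Sum>k\<in>{1..2*c}. card (touch k))" by (simp add: sum_distrib_left)
    also have "\<dots> \<le> 2 * (c * n)" using sum_touch by simp
    finally show False using c_pos by simp
  qed
  define Good where "Good = {0..<n} - touch k"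
  have cGood: "real n \<le> 2 * real (card Good)"
  proof -
    have "card Good = n - card (touch k)" unfolding Good_def
      by (subst card_Diff_subset) (auto simp: touch_def)
    then show ?thesis using k(2) by linarith
  qed
  define T where "T = {t\<in>{0..<m}. b (k - 1) \<le> real (deg t)}"
  have Tsub: "T \<subseteq> {0..<m}" unfolding T_def by auto
  have bk1: "b (k - 1) \<ge> 1" using k(1) by (intro bpos) auto
  have bk: "b k \<ge> 1" using k(1) by (intro bpos) auto
  have cardT: "real (card T) \<le> real c * real n / b (k - 1)"
  proof -
    have "real (card T) * b (k - 1) = (\<Sum>t\<in>T. b (k - 1))" by simp
    also have "\<dots> \<le> (\<Sum>t\<in>T. real (deg t))" by (intro sum_mono) (auto simp: T_def)
    also have "\<dots> \<le> (\<Sum>t\<in>{0..<m}. real (deg t))" by (intro sum_mono2 Tsub) auto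
    also have "\<dots> = real (\<Sum>t\<in>{0..<m}. deg t)" by simp
    also have "\<dots> \<le> real c * real n" using tot by (metis of_nat_le_iff of_nat_mult)
    finally show ?thesis using bk1 by (simp add: pos_le_divide_eq)
  qed
  define K where "K = (\<lambda>j. N j - T)"
  define R where "R = (\<lambda>x y. K x \<inter> K y \<noteq> {} \<or> x = y)"
  have degK: "real (deg t) < b k" if "x \<in> Good" "t \<in> K x" for x t
  proof -
    have t: "t \<in> N x" "t \<notin> T" using that unfolding K_def by auto
    have t3: "t < m" using Nsub[of x] t(1) by auto
    have "x \<in> {0..<n}" "N x \<inter> L k = {}" using that(1) unfolding Good_def touch_def by auto
    then have "t \<notin> L k" using t by auto
    moreover have "real (deg t) < b (k - 1)" using t t3 unfolding T_def by auto
    ultimately show ?thesis using t t3 unfolding L_def by auto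
  qed
  have nbr: "real (card {y\<in>Good. R x y}) \<le> real c * b k" if x: "x \<in> Good" for x
  proof (cases "K x = {}")
    case True
    then have "{y\<in>Good. R x y} \<subseteq> {x}" unfolding R_def by auto
    then have "card {y\<in>Good. R x y} \<le> card {x}" by (intro card_mono) auto
    then have "card {y\<in>Good. R x y} \<le> 1" by simp
    moreover have "1 \<le> real c * b k"
    proof -
      have "real c \<ge> 1" using c_pos by simp
      then have "1 * 1 \<le> real c * b k" using bk by (intro mult_mono) auto
      then show ?thesis by simp
    qed
    ultimately show ?thesis by linarith
  next
    case False
    define Dset where "Dset = (\<lambda>t. {j\<in>{0..<n}. t \<in> N j})"
    have "{y\<in>Good. R x y} \<subseteq> (\<Union>t\<in>K x. Dset t)"
      using False x unfolding R_def Dset_def Good_def K_def by auto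
    then have "card {y\<in>Good. R x y} \<le> card (\<Union>t\<in>K x. Dset t)"
      by (intro card_mono) (auto simp: Dset_def K_def finN)
    also have "\<dots> \<le> (\<Sum>t\<in>K x. card (Dset t))"
      by (rule card_UN_le) (auto simp: K_def finN)
    finally have "real (card {y\<in>Good. R x y}) \<le> real (\<Sum>t\<in>K x. card (Dset t))"
      by (simp only: of_nat_le_iff)
    also have "\<dots> = (\<Sum>t\<in>K x. real (deg t))"
      unfolding Dset_def deg_def by simp
    also have "\<dots> \<le> (\<Sum>t\<in>K x. b k)" using degK[OF x] by (intro sum_mono less_imp_le) auto
    also have "\<dots> = real (card (K x)) * b k" by simp
    also have "\<dots> \<le> real c * b k"
    proof -
      have "card (K x) \<le> card (N x)" unfolding K_def by (intro card_mono finN) auto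
      also have "\<dots> \<le> c" using x unfolding Good_def by (intro cardN) auto
      finally show ?thesis using bk by (intro mult_right_mono) auto
    qed
    finally show ?thesis .
  qed
  obtain S where S: "S \<subseteq> Good" "\<forall>x\<in>S. \<forall>y\<in>S. x \<noteq> y \<longrightarrow> \<not> R x y"
    "real (card Good) \<le> (real c * b k) * real (card S)"
  proof -
    have "\<exists>S\<subseteq>Good. (\<forall>x\<in>S. \<forall>y\<in>S. x \<noteq> y \<longrightarrow> \<not> R x y) \<and> real (card Good) \<le> (real c * b k) * real (card S)"
    proof (rule greedy)
      show "finite Good" unfolding Good_def by simp
      show "R y x" if "R x y" for x y using that unfolding R_def by (auto simp: inf_commute)
      show "R x x" for x unfolding R_def by simp
      show "real (card {y\<in>Good. R x y}) \<le> real c * b k" if "x \<in> Good" for x by (rule nbr[OF that])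
    qed
    then show ?thesis using that by blast
  qed
  have cardS: "real (card S) \<ge> real n / (2 * real c * b k)"
  proof -
    have pos: "0 < 2 * real c * b k" using c_pos bk by simp
    have "real n \<le> (2 * real c * b k) * real (card S)" using cGood S(3) by linarith
    then show ?thesis using pos by (simp add: divide_le_eq mult.commute)
  qed
  have disj: "disjoint_family_on K S"
    using S(2) unfolding disjoint_family_on_def R_def by blast
  define B where "B = (\<lambda>i. bernoulli_pmf (p i))"
  have indep: "prob_space.indep_vars
            (measure_pmf (cond_pmf (input_dist m p) {w. \<forall>j\<in>T. w j = a j}))
            (\<lambda>_. count_space (UNIV :: bool set)) (\<lambda>j w. f w j) S"
    if ne: "set_pmf (input_dist m p) \<inter> {w. \<forall>j\<in>T. w j = a j} \<noteq> {}" for a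
  proof -
    define B' where "B' = (\<lambda>i. if i \<in> T then return_pmf (a i) else B i)"
    have ne': "set_pmf (Pi_pmf {0..<m} False B) \<inter> {w. \<forall>j\<in>T. w j = a j} \<noteq> {}"
      using ne unfolding input_dist_def B_def .
    have cd: "cond_pmf (input_dist m p) {w. \<forall>j\<in>T. w j = a j} = Pi_pmf {0..<m} False B'"
      unfolding input_dist_def B'_def B_def[symmetric]
      by (rule cond_Pi_pmf[OF _ Tsub ne']) simp
    define ext where "ext = (\<lambda>j (r :: nat \<Rightarrow> bool) i. if i \<in> K j then r i else if i \<in> T then a i else False)"
    have "prob_space.indep_vars (measure_pmf (Pi_pmf {0..<m} False B')) (\<lambda>_. count_space UNIV)
        (\<lambda>j w. f w j) S"
    proof (rule indep_blocks[where Y = "\<lambda>j r. f (ext j r) j"])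
      show "finite {0..<m}" by simp
      show "K j \<subseteq> {0..<m}" if "j \<in> S" for j using Nsub unfolding K_def by blast
      show "disjoint_family_on K S" by (rule disj)
      fix j w assume j: "j \<in> S" and w: "w \<in> set_pmf (Pi_pmf {0..<m} False B')"
      have wset: "w \<in> PiE_dflt {0..<m} False (\<lambda>x. set_pmf (B' x))"
        using w by (simp add: set_Pi_pmf o_def)
      have w_in: "w \<in> inputs m" using wset unfolding inputs_def PiE_dflt_def by auto
      have wT: "w i = a i" if "i \<in> T" for i
      proof -
        have "i < m" using that Tsub by auto
        then have "w i \<in> set_pmf (B' i)" using wset unfolding PiE_dflt_def by auto
        then show ?thesis using that unfolding B'_def by simp
      qed
      have e_in: "ext j (restrict w (K j)) \<in> inputs m"
        using Tsub Nsub[of j] unfolding inputs_def ext_def K_def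
        by (auto simp: subset_iff not_less[symmetric])
      show "f w j = f (ext j (restrict w (K j))) j"
      proof (rule local_dep[OF w_in e_in])
        fix i assume "affects f m i j"
        then have "i \<in> N j" unfolding N_def by simp
        then show "w i = ext j (restrict w (K j)) i"
          unfolding ext_def K_def using wT by auto
      qed
    qed
    then show ?thesis unfolding cd .
  qed
  have Sn: "S \<subseteq> {0..<n}" using S(1) unfolding Good_def by auto
  have k0: "0 < k" "k \<le> 2 * c" using k(1) by auto
  show ?thesis
    apply (rule exI[of _ k], rule exI[of _ S], rule exI[of _ T])
    using k0 Sn Tsub cardS cardT indep by blast
qed

end
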